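(* Let $\mathbf f=(M,\mathscr L,\lambda,\kappa,\theta,\Omega)$ be an additive frame. Then $\mathbf f$ is an additive$^+$ frame (i.e. $|M|\ge\lambda$) if and only if for each $\varepsilon\in(0,\theta)$ there exists $\bar a\in{}^\varepsilon M$ such that $\varphi_{\bar a}(M)$ has cardinality $\ge\lambda$.
   Context: A general frame is a tuple $\mathbf f=(M,\mathscr L,\lambda,\kappa,\theta,\Omega)$ where: (1) $M$ is a $\tau_M$-model; (2) $\mathscr L$ is a class of infinitary formulas in vocabulary $\tau_M$ (built using conjunctions, disjunctions and quantifiers $\exists^\sigma,\forall^\sigma$, $\sigma\in\Omega$, where $\exists^\sigma\bar x'$ asserts existence of $\sigma$ pairwise distinct witnesses), each of the form $\varphi(\bar x)$ with $\lg(\bar x)<\theta$, and $\mathscr L$ is closed under permuting variables, adding dummy variables and finite conjunctions; for such $\varphi$, $\varphi(M)=\{\bar a: M\models\varphi[\bar a]\}$; (3) for every $\varepsilon<\theta$ and $\bar a\in{}^\varepsilon M$ there is $\varphi_{\bar a}(\bar x)\in\mathscr L$ with $\bar a\in\varphi_{\bar a}(M)$ and $\varphi_{\bar a}(M)\subseteq\psi(M)$ whenever $\psi(\bar x)\in\mathscr L$ and $\bar a\in\psi(M)$; (4)(a) if $\varphi_\alpha(\bar x)\in\mathscr L$ for $\alpha<\kappa$ then $\varphi_\alpha(M)\supseteq\varphi_\beta(M)$ for some $\alpha<\beta<\kappa$; (4)(b) if $\varphi_{\alpha,\beta}(\bar x,\bar y)\in\mathscr L$ for $\alpha<\beta<\lambda$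 then there are $\alpha_1<\alpha_2<\alpha_3<\lambda$ with $\varphi_{\alpha_1,\alpha_2}(M)\supseteq\varphi_{\alpha_1,\alpha_3}(M)$ and $\varphi_{\alpha_1,\alpha_2}(M)\supseteq\varphi_{\alpha_2,\alpha_3}(M)$; (5) $\lambda,\kappa$ are regular, $\lambda\ge\kappa\ge\theta\ge|\Omega|+|\tau_M|$, and $\Omega$ is a set of cardinals with $1\in\Omega$, all other members infinite. It is an additive frame if moreover (6) $M$ is an additive $\theta$-model ($+,-,0\in\tau_M$, $(|M|,+,-,0)$ an abelian group, predicates interpreted as subgroups of powers of $M$, function symbols as homomorphisms, $|\tau_M|\le\theta$) and (7) for every $\varphi(\bar x_u)\in\mathscr L$, $\varphi(M)$ is a subgroup of ${}^uM$. An additive frame is additive$^+$ if $|M|\ge\lambda$. *)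

theory Defs
  imports "HOL-Library.FuncSet"
begin

unbundle cardinal_syntax

record ('m,'r,'f,'i) amodel =
  univ   :: "'m set"
  rels   :: "'r set"
  funs   :: "'f set"
  rarity :: "'r \<Rightarrow> 'i set"
  farity :: "'f \<Rightarrow> 'i set"
  rint   :: "'r \<Rightarrow> ('i \<Rightarrow> 'm) set"
  fint   :: "'f \<Rightarrow> ('i \<Rightarrow> 'm) \<Rightarrow> 'm"
  gadd   :: "'m \<Rightarrow> 'm \<Rightarrow> 'm"
  gneg   :: "'m \<Rightarrow> 'm"
  gzero  :: "'m"

text \<open>The vocabulary tau_M: the relation symbols, the function symbols and the three
  symbols plus, minus, zero (coded by 0,1,2).\<close>
definition vocab :: "('m,'r,'f,'i,'z) amodel_scheme \<Rightarrow> ('r + 'f + nat) set" where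
  "vocab M = Inl ` rels M \<union> Inr ` Inl ` funs M \<union> Inr ` Inr ` {0,1,2}"

definition pow :: "('m,'r,'f,'i,'z) amodel_scheme \<Rightarrow> 'd set \<Rightarrow> ('d \<Rightarrow> 'm) set" where
  "pow M D = PiE D (\<lambda>_. univ M)"

definition subgroup_pow :: "('m,'r,'f,'i,'z) amodel_scheme \<Rightarrow> 'd set \<Rightarrow> ('d \<Rightarrow> 'm) set \<Rightarrow> bool" where
  "subgroup_pow M D S \<longleftrightarrow> S \<subseteq> pow M D
     \<and> restrict (\<lambda>_. gzero M) D \<in> S
     \<and> (\<forall>a\<in>S. \<forall>b\<in>S. restrict (\<lambda>d. gadd M (a d) (b d)) D \<in> S)
     \<and> (\<forall>a\<in>S. restrict (\<lambda>d. gneg M (a d)) D \<in> S)"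

definition abelian_group_on :: "('m,'r,'f,'i,'z) amodel_scheme \<Rightarrow> bool" where
  "abelian_group_on M \<longleftrightarrow>
     gzero M \<in> univ M
   \<and> (\<forall>x\<in>univ M. \<forall>y\<in>univ M. gadd M x y \<in> univ M)
   \<and> (\<forall>x\<in>univ M. gneg M x \<in> univ M)
   \<and> (\<forall>x\<in>univ M. \<forall>y\<in>univ M. \<forall>z\<in>univ M. gadd M (gadd M x y) z = gadd M x (gadd M y z))
   \<and> (\<forall>x\<in>univ M. \<forall>y\<in>univ M. gadd M x y = gadd M y x)
   \<and> (\<forall>x\<in>univ M. gadd M x (gzero M) = x)
   \<and> (\<forall>x\<in>univ M. gadd M x (gneg M x) = gzero M)"

definition additive_model :: "('m,'r,'f,'i,'z) amodel_scheme \<Rightarrow> 'o rel \<Rightarrow> bool" where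
  "additive_model M th \<longleftrightarrow>
     abelian_group_on M
   \<and> (\<forall>R\<in>rels M. subgroup_pow M (rarity M R) (rint M R))
   \<and> (\<forall>F\<in>funs M. (\<forall>a\<in>pow M (farity M F). fint M F a \<in> univ M)
        \<and> (\<forall>a\<in>pow M (farity M F). \<forall>b\<in>pow M (farity M F).
             fint M F (restrict (\<lambda>d. gadd M (a d) (b d)) (farity M F))
               = gadd M (fint M F a) (fint M F b)))
   \<and> |vocab M| \<le>o th"

datatype ('f,'v,'i) tm =
    Var 'v
  | Zero
  | Plus "('f,'v,'i) tm" "('f,'v,'i) tm"
  | Minus "('f,'v,'i) tm"
  | App 'f "'i \<Rightarrow> ('f,'v,'i) tm"

datatype ('r,'f,'v,'i,'c) fm =
    Eq "('f,'v,'i) tm" "('f,'v,'i) tm"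
  | Rel 'r "'i \<Rightarrow> ('f,'v,'i) tm"
  | And "('r,'f,'v,'i,'c) fm" "('r,'f,'v,'i,'c) fm"
  | Conj "'i set" "'i \<Rightarrow> ('r,'f,'v,'i,'c) fm"
  | Disj "'i set" "'i \<Rightarrow> ('r,'f,'v,'i,'c) fm"
  | ExQ "'c rel" "'v set" "('r,'f,'v,'i,'c) fm"
  | AllQ "'c rel" "'v set" "('r,'f,'v,'i,'c) fm"

primrec eval :: "('m,'r,'f,'i,'z) amodel_scheme \<Rightarrow> ('v \<Rightarrow> 'm) \<Rightarrow> ('f,'v,'i) tm \<Rightarrow> 'm" where
  "eval M s (Var v) = s v"
| "eval M s Zero = gzero M"
| "eval M s (Plus t u) = gadd M (eval M s t) (eval M s u)"
| "eval M s (Minus t) = gneg M (eval M s t)"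
| "eval M s (App F ts) = fint M F (restrict (\<lambda>i. eval M s (ts i)) (farity M F))"

primrec tm_fv :: "('f,'v,'i) tm \<Rightarrow> 'v set" where
  "tm_fv (Var v) = {v}" | "tm_fv Zero = {}" | "tm_fv (Plus t u) = tm_fv t \<union> tm_fv u"
| "tm_fv (Minus t) = tm_fv t" | "tm_fv (App F ts) = (\<Union>i. tm_fv (ts i))"

primrec tm_funs :: "('f,'v,'i) tm \<Rightarrow> 'f set" where
  "tm_funs (Var v) = {}" | "tm_funs Zero = {}" | "tm_funs (Plus t u) = tm_funs t \<union> tm_funs u"
| "tm_funs (Minus t) = tm_funs t" | "tm_funs (App F ts) = insert F (\<Union>i. tm_funs (ts i))"

text \<open>Satisfaction. \<open>ExQ \<sigma> w \<phi>\<close> holds iff there are (at least) \<sigma> pairwise distinct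
  assignments to the variables in w (witnesses) satisfying \<phi>; \<open>AllQ \<sigma> w \<phi>\<close> is its dual:
  fewer than \<sigma> assignments to w fail \<phi> (for \<sigma> = 1 these are the usual quantifiers).\<close>
primrec sat :: "('m,'r,'f,'i,'z) amodel_scheme \<Rightarrow> ('r,'f,'v,'i,'c) fm \<Rightarrow> ('v \<Rightarrow> 'm) \<Rightarrow> bool" where
  "sat M (Eq t u) s = (eval M s t = eval M s u)"
| "sat M (Rel R ts) s = (restrict (\<lambda>i. eval M s (ts i)) (rarity M R) \<in> rint M R)"
| "sat M (And \<phi> \<psi>) s = (sat M \<phi> s \<and> sat M \<psi> s)"
| "sat M (Conj I \<phi>s) s = (\<forall>i\<in>I. sat M (\<phi>s i) s)"
| "sat M (Disj I \<phi>s) s = (\<exists>i\<in>I. sat M (\<phi>s i) s)"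
| "sat M (ExQ \<sigma> w \<phi>) s =
     (\<exists>W. W \<subseteq> pow M w \<and> \<sigma> \<le>o |W| \<and> (\<forall>g\<in>W. sat M \<phi> (override_on s g w)))"
| "sat M (AllQ \<sigma> w \<phi>) s =
     ( |{g \<in> pow M w. \<not> sat M \<phi> (override_on s g w)}| <o \<sigma>)"

primrec fm_fv :: "('r,'f,'v,'i,'c) fm \<Rightarrow> 'v set" where
  "fm_fv (Eq t u) = tm_fv t \<union> tm_fv u"
| "fm_fv (Rel R ts) = (\<Union>i. tm_fv (ts i))"
| "fm_fv (And \<phi> \<psi>) = fm_fv \<phi> \<union> fm_fv \<psi>"
| "fm_fv (Conj I \<phi>s) = (\<Union>i\<in>I. fm_fv (\<phi>s i))"
| "fm_fv (Disj I \<phi>s) = (\<Union>i\<in>I. fm_fv (\<phi>s i))"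
| "fm_fv (ExQ \<sigma> w \<phi>) = fm_fv \<phi> - w"
| "fm_fv (AllQ \<sigma> w \<phi>) = fm_fv \<phi> - w"

primrec fm_ok :: "('m,'r,'f,'i,'z) amodel_scheme \<Rightarrow> 'c rel set \<Rightarrow> ('r,'f,'v,'i,'c) fm \<Rightarrow> bool" where
  "fm_ok M Om (Eq t u) = (tm_funs t \<union> tm_funs u \<subseteq> funs M)"
| "fm_ok M Om (Rel R ts) = (R \<in> rels M \<and> (\<forall>i. tm_funs (ts i) \<subseteq> funs M))"
| "fm_ok M Om (And \<phi> \<psi>) = (fm_ok M Om \<phi> \<and> fm_ok M Om \<psi>)"
| "fm_ok M Om (Conj I \<phi>s) = (\<forall>i\<in>I. fm_ok M Om (\<phi>s i))"
| "fm_ok M Om (Disj I \<phi>s) = (\<forall>i\<in>I. fm_ok M Om (\<phi>s i))"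
| "fm_ok M Om (ExQ \<sigma> w \<phi>) = (\<sigma> \<in> Om \<and> fm_ok M Om \<phi>)"
| "fm_ok M Om (AllQ \<sigma> w \<phi>) = (\<sigma> \<in> Om \<and> fm_ok M Om \<phi>)"

text \<open>Ordinals \<open>\<epsilon> < \<theta>\<close> are represented by elements e of the field of the cardinal
  (well-order) th: \<open>\<epsilon>\<close> is the order type of \<open>underS th e\<close>.  A formula \<open>\<phi>(x\<^sub>\<epsilon>)\<close> is a
  triple (\<phi>, e, xs) where xs, injective on \<open>underS th e\<close>, is the sequence of free
  variables of length \<open>\<epsilon>\<close>.  \<open>\<^sup>\<epsilon>M\<close> is \<open>pow M (underS th e)\<close>.\<close>

definition asg :: "('o \<Rightarrow> 'v) \<Rightarrow> 'o set \<Rightarrow> ('o \<Rightarrow> 'm) \<Rightarrow> 'v \<Rightarrow> 'm" where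
  "asg xs D a = (\<lambda>v. if v \<in> xs ` D then a (the_inv_into D xs v) else undefined)"

definition fmext :: "('m,'r,'f,'i,'z) amodel_scheme \<Rightarrow> 'o rel
    \<Rightarrow> ('r,'f,'v,'i,'c) fm \<times> 'o \<times> ('o \<Rightarrow> 'v) \<Rightarrow> ('o \<Rightarrow> 'm) set" where
  "fmext M th F = (case F of (\<phi>, e, xs) \<Rightarrow>
      {a \<in> pow M (underS th e). sat M \<phi> (asg xs (underS th e) a)})"

definition is_phi_a :: "('m,'r,'f,'i,'z) amodel_scheme
    \<Rightarrow> (('r,'f,'v,'i,'c) fm \<times> 'o \<times> ('o \<Rightarrow> 'v)) set \<Rightarrow> 'o rel \<Rightarrow> 'o \<Rightarrow> ('o \<Rightarrow> 'v)
    \<Rightarrow> ('o \<Rightarrow> 'm) \<Rightarrow> ('r,'f,'v,'i,'c) fm \<Rightarrow> bool" where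
  "is_phi_a M L th e xs a \<phi> \<longleftrightarrow>
     (\<phi>, e, xs) \<in> L \<and> a \<in> fmext M th (\<phi>, e, xs)
   \<and> (\<forall>\<psi>. (\<psi>, e, xs) \<in> L \<and> a \<in> fmext M th (\<psi>, e, xs)
          \<longrightarrow> fmext M th (\<phi>, e, xs) \<subseteq> fmext M th (\<psi>, e, xs))"

definition frame :: "('m,'r,'f,'i,'z) amodel_scheme
    \<Rightarrow> (('r,'f,'v,'i,'c) fm \<times> 'o \<times> ('o \<Rightarrow> 'v)) set
    \<Rightarrow> 'l rel \<Rightarrow> 'k rel \<Rightarrow> 'o rel \<Rightarrow> 'c rel set \<Rightarrow> bool" where
  "frame M L lam kap th Om \<longleftrightarrow>
   \<comment> \<open>enough variables are available\<close>
     |Field th| \<le>o |UNIV :: 'v set|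
   \<comment> \<open>(2): formulas of L\<close>
   \<and> (\<forall>(\<phi>, e, xs)\<in>L. e \<in> Field th \<and> inj_on xs (underS th e)
        \<and> fm_fv \<phi> \<subseteq> xs ` underS th e \<and> fm_ok M Om \<phi>)
   \<comment> \<open>(2): closure under permuting variables\<close>
   \<and> (\<forall>\<phi> e xs \<pi>. (\<phi>, e, xs) \<in> L \<and> bij_betw \<pi> (underS th e) (underS th e)
        \<longrightarrow> (\<phi>, e, xs \<circ> \<pi>) \<in> L)
   \<comment> \<open>(2): closure under adding dummy variables\<close>
   \<and> (\<forall>\<phi> e xs e' ys. (\<phi>, e, xs) \<in> L \<and> e' \<in> Field th \<and> (e, e') \<in> th
        \<and> inj_on ys (underS th e') \<and> (\<forall>i\<in>underS th e. ys i = xs i)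
        \<longrightarrow> (\<phi>, e', ys) \<in> L)
   \<comment> \<open>(2): closure under finite conjunctions\<close>
   \<and> (\<forall>\<phi> \<psi> e xs. (\<phi>, e, xs) \<in> L \<and> (\<psi>, e, xs) \<in> L \<longrightarrow> (And \<phi> \<psi>, e, xs) \<in> L)
   \<comment> \<open>(3)\<close>
   \<and> (\<forall>e xs a. e \<in> Field th \<and> inj_on xs (underS th e) \<and> a \<in> pow M (underS th e)
        \<longrightarrow> (\<exists>\<phi>. is_phi_a M L th e xs a \<phi>))
   \<comment> \<open>(4)(a)\<close>
   \<and> (\<forall>e xs (\<Phi> :: 'k \<Rightarrow> ('r,'f,'v,'i,'c) fm). (\<forall>\<alpha>\<in>Field kap. (\<Phi> \<alpha>, e, xs) \<in> L) \<longrightarrow>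
        (\<exists>\<alpha> \<beta>. (\<alpha>, \<beta>) \<in> kap \<and> \<alpha> \<noteq> \<beta>
           \<and> fmext M th (\<Phi> \<beta>, e, xs) \<subseteq> fmext M th (\<Phi> \<alpha>, e, xs)))
   \<comment> \<open>(4)(b)\<close>
   \<and> (\<forall>e xs (\<Phi> :: 'l \<Rightarrow> 'l \<Rightarrow> ('r,'f,'v,'i,'c) fm).
        (\<forall>\<alpha> \<beta>. (\<alpha>, \<beta>) \<in> lam \<and> \<alpha> \<noteq> \<beta> \<longrightarrow> (\<Phi> \<alpha> \<beta>, e, xs) \<in> L) \<longrightarrow>
        (\<exists>\<alpha>1 \<alpha>2 \<alpha>3. (\<alpha>1, \<alpha>2) \<in> lam \<and> \<alpha>1 \<noteq> \<alpha>2 \<and> (\<alpha>2, \<alpha>3) \<in> lam \<and> \<alpha>2 \<noteq> \<alpha>3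
           \<and> fmext M th (\<Phi> \<alpha>1 \<alpha>3, e, xs) \<subseteq> fmext M th (\<Phi> \<alpha>1 \<alpha>2, e, xs)
           \<and> fmext M th (\<Phi> \<alpha>2 \<alpha>3, e, xs) \<subseteq> fmext M th (\<Phi> \<alpha>1 \<alpha>2, e, xs)))
   \<comment> \<open>(5)\<close>
   \<and> Card_order lam \<and> Cinfinite lam \<and> regularCard lam
   \<and> Card_order kap \<and> Cinfinite kap \<and> regularCard kap
   \<and> Card_order th
   \<and> kap \<le>o lam \<and> th \<le>o kap \<and> |Om| +c |vocab M| \<le>o th
   \<and> (\<forall>\<sigma>\<in>Om. Card_order \<sigma>)
   \<and> (\<forall>\<sigma>\<in>Om. \<forall>\<sigma>'\<in>Om. \<sigma> =o \<sigma>' \<longrightarrow> \<sigma> = \<sigma>')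
   \<and> (\<exists>\<sigma>\<in>Om. card (Field \<sigma>) = 1)
   \<and> (\<forall>\<sigma>\<in>Om. card (Field \<sigma>) = 1 \<or> infinite (Field \<sigma>))"

definition additive_frame where
  "additive_frame M L lam kap th Om \<longleftrightarrow>
     frame M L lam kap th Om
   \<and> additive_model M th
   \<and> (\<forall>(\<phi>, e, xs)\<in>L. subgroup_pow M (underS th e) (fmext M th (\<phi>, e, xs)))"

definition additive_plus_frame where
  "additive_plus_frame M L lam kap th Om \<longleftrightarrow>
     additive_frame M L lam kap th Om \<and> lam \<le>o |univ M|"

end

theory Submission imports Defs begin

lemma pow_single_le: "|pow M {d}| \<le>o |univ M|"
proof -
  have "inj_on (\<lambda>g. g d) (pow M {d})"
    unfolding pow_def inj_on_def by (auto simp: PiE_iff extensional_def fun_eq_iff, metis)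
  moreover have "(\<lambda>g. g d) ` pow M {d} \<subseteq> univ M" unfolding pow_def by auto
  ultimately show ?thesis using card_of_ordLeq by blast
qed

lemma univ_le_pow: assumes "d \<in> D" shows "|univ M| \<le>o |pow M D|"
proof -
  have "inj_on (\<lambda>x. restrict (\<lambda>_. x) D) (univ M)"
    unfolding inj_on_def using assms by (metis restrict_apply')
  moreover have "(\<lambda>x. restrict (\<lambda>_. x) D) ` univ M \<subseteq> pow M D" unfolding pow_def by auto
  ultimately show ?thesis using card_of_ordLeq by blast
qed

lemma exists_second:
  fixes th :: "'o rel"
  assumes co: "Card_order th" and v: "|vocab M| \<le>o th"
  shows "\<exists>e\<in>Field th. \<exists>d. underS th e = {d}"
proof -
  have wo: "wo_rel th" using co unfolding card_order_on_def wo_rel_def by auto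
  have "|vocab M| \<le>o |Field th|"
    using v card_of_Field_ordIso[OF co] ordIso_symmetric ordLeq_ordIso_trans by blast
  then obtain g where g: "inj_on g (vocab M)" "g ` vocab M \<subseteq> Field th"
    unfolding card_of_ordLeq[symmetric] by blast
  have i: "Inr (Inr 0) \<in> vocab M" "Inr (Inr 1) \<in> vocab M" unfolding vocab_def by auto
  have ne: "g (Inr (Inr 0)) \<noteq> g (Inr (Inr 1))" using g(1) i by (metis inj_onD Inr_inject zero_neq_one)
  define e0 where "e0 = wo_rel.minim th (Field th)"
  define e1 where "e1 = wo_rel.minim th (Field th - {e0})"
  have F0: "Field th \<noteq> {}" using g i by auto
  have e0F: "e0 \<in> Field th" unfolding e0_def using wo_rel.minim_in[OF wo, of "Field th"] F0 by auto
  have F1: "Field th - {e0} \<noteq> {}" using g i ne by auto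
  have e1F: "e1 \<in> Field th - {e0}" unfolding e1_def using wo_rel.minim_in[OF wo, of "Field th - {e0}"] F1 by auto
  have "underS th e1 = {e0}"
  proof
    show "{e0} \<subseteq> underS th e1"
      using wo_rel.minim_least[OF wo, of "Field th" e1] e1F unfolding e0_def underS_def by auto
    show "underS th e1 \<subseteq> {e0}"
    proof
      fix x assume x: "x \<in> underS th e1"
      show "x \<in> {e0}"
      proof (rule ccontr)
        assume "x \<notin> {e0}"
        hence "x \<in> Field th - {e0}" using x unfolding underS_def Field_def by auto
        hence "(e1, x) \<in> th" unfolding e1_def using wo_rel.minim_least[OF wo] by blast
        with x show False using wo unfolding underS_def wo_rel_def well_order_on_def linear_order_on_def
          partial_order_on_def antisym_def by blast
      qed
    qed
  qed
  thus ?thesis using e1F by blast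
qed

lemma forward:
  fixes M :: "('m,'r,'f,'i,'z) amodel_scheme"
    and L :: "(('r,'f,'v,'i,'c) fm \<times> 'o \<times> ('o \<Rightarrow> 'v)) set"
    and lam :: "'l rel" and kap :: "'k rel" and th :: "'o rel" and Om :: "'c rel set"
  assumes fr: "frame M L lam kap th Om" and big: "lam \<le>o |univ M|"
    and eF: "e \<in> Field th" and ne: "underS th e \<noteq> {}"
  shows "\<exists>a\<in>pow M (underS th e). \<exists>xs \<phi>. is_phi_a M L th e xs a \<phi>
           \<and> lam \<le>o |fmext M th (\<phi>, e, xs)|"
proof (rule ccontr)
  assume nc: "\<not> ?thesis"
  define D where "D = underS th e"
  define P where "P = pow M D"
  have vF: "|Field th| \<le>o |UNIV :: 'v set|" using fr[unfolded frame_def] by (elim conjE) assumption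
  have c6: "\<forall>e xs a. e \<in> Field th \<and> inj_on xs (underS th e) \<and> a \<in> pow M (underS th e)
        \<longrightarrow> (\<exists>\<phi>. is_phi_a M L th e xs a \<phi>)" using fr[unfolded frame_def] by (elim conjE) assumption
  have c8: "\<forall>e xs (\<Phi> :: 'l \<Rightarrow> 'l \<Rightarrow> ('r,'f,'v,'i,'c) fm).
        (\<forall>\<alpha> \<beta>. (\<alpha>, \<beta>) \<in> lam \<and> \<alpha> \<noteq> \<beta> \<longrightarrow> (\<Phi> \<alpha> \<beta>, e, xs) \<in> L) \<longrightarrow>
        (\<exists>\<alpha>1 \<alpha>2 \<alpha>3. (\<alpha>1, \<alpha>2) \<in> lam \<and> \<alpha>1 \<noteq> \<alpha>2 \<and> (\<alpha>2, \<alpha>3) \<in> lam \<and> \<alpha>2 \<noteq> \<alpha>3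
           \<and> fmext M th (\<Phi> \<alpha>1 \<alpha>3, e, xs) \<subseteq> fmext M th (\<Phi> \<alpha>1 \<alpha>2, e, xs)
           \<and> fmext M th (\<Phi> \<alpha>2 \<alpha>3, e, xs) \<subseteq> fmext M th (\<Phi> \<alpha>1 \<alpha>2, e, xs))"
     using fr[unfolded frame_def] by (elim conjE) assumption
  have co: "Card_order lam" using fr[unfolded frame_def] by (elim conjE) assumption
  have ci: "cinfinite lam" using fr[unfolded frame_def] by (elim conjE) assumption
  have rg: "regularCard lam" using fr[unfolded frame_def] by (elim conjE) assumption
  from vF[folded card_of_ordLeq] obtain h :: "'o \<Rightarrow> 'v" where h: "inj_on h (Field th)" by blast
  have Dsub: "D \<subseteq> Field th" unfolding D_def underS_def Field_def by auto
  define xs where "xs = h"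
  have xs: "inj_on xs D" using h Dsub inj_on_subset unfolding xs_def by blast
  have ex3: "\<And>a. a \<in> P \<Longrightarrow> \<exists>\<phi>. is_phi_a M L th e xs a \<phi>"
    using c6[rule_format, of e xs] eF xs unfolding P_def D_def by simp
  define ph where "ph a = (SOME \<phi>. is_phi_a M L th e xs a \<phi>)" for a
  have ph: "\<And>a. a \<in> P \<Longrightarrow> is_phi_a M L th e xs a (ph a)"
    unfolding ph_def using ex3 by (rule someI_ex)
  define S where "S a = (if a \<in> P then fmext M th (ph a, e, xs) else {})" for a
  have wl: "Well_order lam" using co card_order_on_well_order_on by blast
  have small: "|S a| <o lam" for a
  proof (cases "a \<in> P")
    case True
    have "\<not> lam \<le>o |S a|" using nc ph[OF True] True unfolding S_def P_def D_def by auto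
    then show ?thesis using not_ordLeq_iff_ordLess[OF card_of_Well_order wl] by blast
  next
    case False
    have "|{} :: ('o \<Rightarrow> 'm) set| <o lam"
      by (rule finite_ordLess_infinite[OF card_of_Well_order wl]) (use ci in \<open>simp_all add: cinfinite_def Field_card_of\<close>)
    then show ?thesis using False unfolding S_def by simp
  qed
  have inS: "a \<in> S a" if aP: "a \<in> P" for a
  proof -
    have "a \<in> fmext M th (ph a, e, xs)" using ph[OF aP] unfolding is_phi_a_def by (elim conjE)
    thus ?thesis using aP unfolding S_def by simp
  qed
  have dN: "D \<noteq> {}" using ne D_def by simp
  then obtain d where "d \<in> D" by blast
  have Pbig: "lam \<le>o |P|" using big univ_le_pow[OF `d \<in> D`, of M] ordLeq_transitive unfolding P_def by blast
  have st: "stable lam" using regularCard_stable[OF co _ rg] ci unfolding cinfinite_def by blast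
  define R where "R = lam - Id"
  have wfR: "wf R" using wo_rel.WF wl unfolding R_def wo_rel_def by blast
  define G where "G f b = (SOME x. x \<in> P \<and> x \<notin> (\<Union>c\<in>underS lam b. S (f c)))" for f :: "'l \<Rightarrow> 'o \<Rightarrow> 'm" and b
  define f where "f = wfrec R G"
  have uR: "underS lam b = {c. (c, b) \<in> R}" for b unfolding underS_def R_def by auto
  have Gcut: "G (cut g R b) b = G g b" for g b
  proof -
    have "(\<Union>c\<in>underS lam b. S (cut g R b c)) = (\<Union>c\<in>underS lam b. S (g c))"
      unfolding uR by (auto simp: cut_apply)
    thus ?thesis unfolding G_def by simp
  qed
  have feq: "f b = G f b" for b
    unfolding f_def using wfrec[OF wfR, of G b] Gcut[of "wfrec R G" b] by simp
  have fprop: "f b \<in> P \<and> f b \<notin> (\<Union>c\<in>underS lam b. S (f c))" if bF: "b \<in> Field lam" for b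
  proof -
    have "|underS lam b| <o lam" using card_of_underS[OF co bF] .
    hence U: "|\<Union>c\<in>underS lam b. S (f c)| <o lam" by (rule stable_UNION[OF st]) (rule small)
    have "\<exists>x. x \<in> P \<and> x \<notin> (\<Union>c\<in>underS lam b. S (f c))"
    proof (rule ccontr)
      assume "\<nexists>x. x \<in> P \<and> x \<notin> (\<Union>c\<in>underS lam b. S (f c))"
      hence "P \<subseteq> (\<Union>c\<in>underS lam b. S (f c))" by blast
      hence "|P| \<le>o |\<Union>c\<in>underS lam b. S (f c)|" by (rule card_of_mono1)
      hence "|P| <o lam" using U by (rule ordLeq_ordLess_trans)
      hence "lam <o lam" using Pbig by (rule ordLeq_ordLess_trans[rotated])
      thus False using ordLess_irreflexive by blast
    qed
    hence "G f b \<in> P \<and> G f b \<notin> (\<Union>c\<in>underS lam b. S (f c))" unfolding G_def by (rule someI_ex)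
    thus ?thesis using feq[of b] by simp
  qed
  define Phi where "Phi (\<alpha>::'l) \<beta> = ph (f \<beta>)" for \<alpha> \<beta>
  have "\<forall>\<alpha> \<beta>. (\<alpha>, \<beta>) \<in> lam \<and> \<alpha> \<noteq> \<beta> \<longrightarrow> (Phi \<alpha> \<beta>, e, xs) \<in> L"
  proof (intro allI impI)
    fix \<alpha> \<beta> assume "(\<alpha>, \<beta>) \<in> lam \<and> \<alpha> \<noteq> \<beta>"
    hence "\<beta> \<in> Field lam" unfolding Field_def by auto
    hence "f \<beta> \<in> P" using fprop by blast
    hence "is_phi_a M L th e xs (f \<beta>) (ph (f \<beta>))" by (rule ph)
    thus "(Phi \<alpha> \<beta>, e, xs) \<in> L" unfolding Phi_def is_phi_a_def by (elim conjE)
  qed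
  then obtain a1 a2 a3 where A: "(a2, a3) \<in> lam" "a2 \<noteq> a3"
      "fmext M th (Phi a2 a3, e, xs) \<subseteq> fmext M th (Phi a1 a2, e, xs)"
    using c8 by blast
  have a3F: "a3 \<in> Field lam" and a2F: "a2 \<in> Field lam" using A unfolding Field_def by auto
  have "f a3 \<in> P" "f a2 \<in> P" using fprop a3F a2F by auto
  hence "S (f a3) \<subseteq> S (f a2)" using A(3) unfolding S_def Phi_def by simp
  hence "f a3 \<in> S (f a2)" using inS `f a3 \<in> P` by blast
  moreover have "a2 \<in> underS lam a3" using A unfolding underS_def by auto
  ultimately show False using fprop[OF a3F] by blast
qed


theorem lemma3p3:
  fixes M :: "('m,'r,'f,'i,'z) amodel_scheme"
    and L :: "(('r,'f,'v,'i,'c) fm \<times> 'o \<times> ('o \<Rightarrow> 'v)) set"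
    and lam :: "'l rel" and kap :: "'k rel" and th :: "'o rel" and Om :: "'c rel set"
  assumes "additive_frame M L lam kap th Om"
  shows "additive_plus_frame M L lam kap th Om \<longleftrightarrow>
    (\<forall>e\<in>Field th. underS th e \<noteq> {} \<longrightarrow>
       (\<exists>a\<in>pow M (underS th e). \<exists>xs \<phi>. is_phi_a M L th e xs a \<phi>
           \<and> lam \<le>o |fmext M th (\<phi>, e, xs)| ))"
proof
  have fr: "frame M L lam kap th Om" using assms unfolding additive_frame_def by (elim conjE)
  {
    assume "additive_plus_frame M L lam kap th Om"
    hence big: "lam \<le>o |univ M|" unfolding additive_plus_frame_def by (elim conjE)
    show "\<forall>e\<in>Field th. underS th e \<noteq> {} \<longrightarrow>
       (\<exists>a\<in>pow M (underS th e). \<exists>xs \<phi>. is_phi_a M L th e xs a \<phi>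
           \<and> lam \<le>o |fmext M th (\<phi>, e, xs)| )"
      using forward[OF fr big] by blast
  }
  {
    assume R: "\<forall>e\<in>Field th. underS th e \<noteq> {} \<longrightarrow>
       (\<exists>a\<in>pow M (underS th e). \<exists>xs \<phi>. is_phi_a M L th e xs a \<phi>
           \<and> lam \<le>o |fmext M th (\<phi>, e, xs)| )"
    have cth: "Card_order th" using fr[unfolded frame_def] by (elim conjE) assumption
    have sm: "|Om| +c |vocab M| \<le>o th" using fr[unfolded frame_def] by (elim conjE) assumption
    have "|vocab M| \<le>o th"
      using ordLeq_transitive[OF ordLeq_csum2[OF card_of_Card_order] sm] .
    then obtain e d where eF: "e \<in> Field th" and ud: "underS th e = {d}"
      using exists_second[OF cth] by blast
    have une: "underS th e \<noteq> {}" using ud by simp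
    obtain a xs \<phi> where "is_phi_a M L th e xs a \<phi>" and lle: "lam \<le>o |fmext M th (\<phi>, e, xs)|"
      using R[rule_format, OF eF une] by blast
    have "fmext M th (\<phi>, e, xs) \<subseteq> pow M {d}" using ud unfolding fmext_def by auto
    hence "|fmext M th (\<phi>, e, xs)| \<le>o |pow M {d}|" by (rule card_of_mono1)
    with lle have "lam \<le>o |pow M {d}|" by (rule ordLeq_transitive)
    hence "lam \<le>o |univ M|" using pow_single_le by (rule ordLeq_transitive)
    thus "additive_plus_frame M L lam kap th Om" using assms unfolding additive_plus_frame_def by simp
  }
qed

end
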